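(* For every $f\in V$, the operator $\mathscr L_f:V\to V$ is not a compact operator; that is, for every neighborhood $U$ of $0$ in $V$, the closure of $\mathscr L_f(U)$ is not compact.
   Context: Let $N\ge2$, $\mathbf A$ an $N\times N$ zero-one aperiodic matrix, $\Sigma_{\mathbf A}^+=\{\omega\in\{1,\dots,N\}^{\mathbb N\cup\{0\}}:\mathbf A(\omega_m\omega_{m+1})=1\ \forall m\}$ with shift $\sigma_{\mathbf A}$. $\mathrm{var}_m(\phi)=\sup\{|\phi(\omega)-\phi(\omega')|:\omega_k=\omega'_k,\ 0\le k\le m-1\}$; $V=\{\phi:\Sigma_{\mathbf A}^+\to\mathbb C:\mathrm{var}_m(\phi)^{1/m}\to0\}$ with the (Fréchet) topology generated by the norms $\|\phi\|_\theta=\|\phi\|_\infty+[\phi]_\theta$, $\theta\in(0,1)$, $[\phi]_\theta$ the Lipschitz constant w.r.t. $d_\theta(\omega,\omega')=\theta^{\min\{m:\omega_m\ne\omega'_m\}}$. $(\mathscr L_f\phi)(\omega)=\sum_{\sigma_{\mathbf A}\omega'=\omega}e^{f(\omega')}\phi(\omega')$. A continuous linear operator $T$ on a metrizable complete topological vector space is compact if the closure of $T(U)$ is compact for some neighborhood $U$ of zero. *)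

theory Defs
  imports "HOL-Analysis.Analysis"
begin

text \<open>Zero-one N x N matrices with indices in {1..N}, represented as functions nat => nat => nat.\<close>

fun mat_pow :: "nat \<Rightarrow> (nat \<Rightarrow> nat \<Rightarrow> nat) \<Rightarrow> nat \<Rightarrow> nat \<Rightarrow> nat \<Rightarrow> nat" where
  "mat_pow N A 0 i j = (if i = j then 1 else 0)"
| "mat_pow N A (Suc n) i j = (\<Sum>k\<in>{1..N}. mat_pow N A n i k * A k j)"

definition zero_one_matrix :: "nat \<Rightarrow> (nat \<Rightarrow> nat \<Rightarrow> nat) \<Rightarrow> bool" where
  "zero_one_matrix N A \<longleftrightarrow> (\<forall>i\<in>{1..N}. \<forall>j\<in>{1..N}. A i j = 0 \<or> A i j = 1)"

definition aperiodic :: "nat \<Rightarrow> (nat \<Rightarrow> nat \<Rightarrow> nat) \<Rightarrow> bool" where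
  "aperiodic N A \<longleftrightarrow> (\<exists>M. \<forall>i\<in>{1..N}. \<forall>j\<in>{1..N}. mat_pow N A M i j > 0)"

definition Sigma_A :: "nat \<Rightarrow> (nat \<Rightarrow> nat \<Rightarrow> nat) \<Rightarrow> (nat \<Rightarrow> nat) set" where
  "Sigma_A N A = {\<omega>. (\<forall>m. \<omega> m \<in> {1..N}) \<and> (\<forall>m. A (\<omega> m) (\<omega> (Suc m)) = 1)}"

definition shift :: "(nat \<Rightarrow> nat) \<Rightarrow> (nat \<Rightarrow> nat)" where
  "shift \<omega> = (\<lambda>m. \<omega> (Suc m))"

definition var :: "nat \<Rightarrow> (nat \<Rightarrow> nat \<Rightarrow> nat) \<Rightarrow> nat \<Rightarrow> ((nat \<Rightarrow> nat) \<Rightarrow> complex) \<Rightarrow> real" where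
  "var N A m \<phi> = (SUP p \<in> {(\<omega>, \<omega>'). \<omega> \<in> Sigma_A N A \<and> \<omega>' \<in> Sigma_A N A \<and> (\<forall>k<m. \<omega> k = \<omega>' k)}.
       cmod (\<phi> (fst p) - \<phi> (snd p)))"

text \<open>The space V. Functions are taken to vanish off Sigma_A (extensional representation);
  boundedness on Sigma_A is implied by the variation condition and only makes the real SUP above meaningful.\<close>
definition Vspace :: "nat \<Rightarrow> (nat \<Rightarrow> nat \<Rightarrow> nat) \<Rightarrow> ((nat \<Rightarrow> nat) \<Rightarrow> complex) set" where
  "Vspace N A = {\<phi>. (\<forall>\<omega>. \<omega> \<notin> Sigma_A N A \<longrightarrow> \<phi> \<omega> = 0)
      \<and> bounded (\<phi> ` Sigma_A N A)
      \<and> ((\<lambda>m. var N A m \<phi> powr (1 / real m)) \<longlonglongrightarrow> 0)}"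

definition first_diff :: "(nat \<Rightarrow> nat) \<Rightarrow> (nat \<Rightarrow> nat) \<Rightarrow> nat" where
  "first_diff \<omega> \<omega>' = (LEAST m. \<omega> m \<noteq> \<omega>' m)"

definition d_theta :: "real \<Rightarrow> (nat \<Rightarrow> nat) \<Rightarrow> (nat \<Rightarrow> nat) \<Rightarrow> real" where
  "d_theta \<theta> \<omega> \<omega>' = (if \<omega> = \<omega>' then 0 else \<theta> ^ first_diff \<omega> \<omega>')"

definition sup_norm :: "nat \<Rightarrow> (nat \<Rightarrow> nat \<Rightarrow> nat) \<Rightarrow> ((nat \<Rightarrow> nat) \<Rightarrow> complex) \<Rightarrow> real" where
  "sup_norm N A \<phi> = (SUP \<omega> \<in> Sigma_A N A. cmod (\<phi> \<omega>))"

definition lip_const :: "nat \<Rightarrow> (nat \<Rightarrow> nat \<Rightarrow> nat) \<Rightarrow> real \<Rightarrow> ((nat \<Rightarrow> nat) \<Rightarrow> complex) \<Rightarrow> real" where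
  "lip_const N A \<theta> \<phi> = (SUP p \<in> {(\<omega>, \<omega>'). \<omega> \<in> Sigma_A N A \<and> \<omega>' \<in> Sigma_A N A \<and> \<omega> \<noteq> \<omega>'}.
       cmod (\<phi> (fst p) - \<phi> (snd p)) / d_theta \<theta> (fst p) (snd p))"

definition theta_norm :: "nat \<Rightarrow> (nat \<Rightarrow> nat \<Rightarrow> nat) \<Rightarrow> real \<Rightarrow> ((nat \<Rightarrow> nat) \<Rightarrow> complex) \<Rightarrow> real" where
  "theta_norm N A \<theta> \<phi> = sup_norm N A \<phi> + lip_const N A \<theta> \<phi>"

definition V_topology :: "nat \<Rightarrow> (nat \<Rightarrow> nat \<Rightarrow> nat) \<Rightarrow> ((nat \<Rightarrow> nat) \<Rightarrow> complex) topology" where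
  "V_topology N A = topology_generated_by
     {{\<psi> \<in> Vspace N A. theta_norm N A \<theta> (\<psi> - \<phi>) < \<epsilon>} | \<phi> \<theta> \<epsilon>.
        \<phi> \<in> Vspace N A \<and> 0 < \<theta> \<and> \<theta> < 1 \<and> 0 < \<epsilon>}"

definition transfer_op :: "nat \<Rightarrow> (nat \<Rightarrow> nat \<Rightarrow> nat) \<Rightarrow> ((nat \<Rightarrow> nat) \<Rightarrow> complex)
    \<Rightarrow> ((nat \<Rightarrow> nat) \<Rightarrow> complex) \<Rightarrow> ((nat \<Rightarrow> nat) \<Rightarrow> complex)" where
  "transfer_op N A f \<phi> = (\<lambda>\<omega>. if \<omega> \<in> Sigma_A N A then
      (\<Sum>\<omega>' \<in> {\<omega>' \<in> Sigma_A N A. shift \<omega>' = \<omega>}. exp (f \<omega>') * \<phi> \<omega>') else 0)"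

end

theory Submission
  imports Defs
begin


definition cons :: "nat \<Rightarrow> (nat \<Rightarrow> nat) \<Rightarrow> (nat \<Rightarrow> nat)" where
  "cons b \<omega> = (\<lambda>k. case k of 0 \<Rightarrow> b | Suc k' \<Rightarrow> \<omega> k')"

lemma shift_cons[simp]: "shift (cons b \<omega>) = \<omega>"
  by (simp add: shift_def cons_def)
lemma cons_0[simp]: "cons b \<omega> 0 = b" by (simp add: cons_def)
lemma cons_Suc[simp]: "cons b \<omega> (Suc k) = \<omega> k" by (simp add: cons_def)

lemma cons_shift: "cons (\<omega> 0) (shift \<omega>) = \<omega>"
  by (rule ext) (simp add: cons_def shift_def split: nat.split)

locale SFT =
  fixes N :: nat and A :: "nat \<Rightarrow> nat \<Rightarrow> nat"
  assumes N2: "N \<ge> 2" and zo: "zero_one_matrix N A" and ap: "aperiodic N A"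
begin

abbreviation "SS \<equiv> Sigma_A N A"

lemma cons_Sigma: "\<omega> \<in> SS \<Longrightarrow> b \<in> {1..N} \<Longrightarrow> A b (\<omega> 0) = 1 \<Longrightarrow> cons b \<omega> \<in> SS"
  unfolding Sigma_A_def by (auto simp: cons_def split: nat.split)

lemma shift_Sigma: "\<omega> \<in> SS \<Longrightarrow> shift \<omega> \<in> SS"
  unfolding Sigma_A_def by (auto simp: shift_def)

lemma mat_pow_path:
  assumes "i \<in> {1..N}" "j \<in> {1..N}" "mat_pow N A n i j > 0"
  shows "\<exists>w. w 0 = i \<and> w n = j \<and> (\<forall>k\<le>n. w k \<in> {1..N}) \<and> (\<forall>k<n. A (w k) (w (Suc k)) = 1)"
  using assms(2,3)
proof (induction n arbitrary: j)
  case 0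
  then have "i = j" by (auto split: if_splits)
  then show ?case using assms(1) by (intro exI[of _ "\<lambda>_. i"]) auto
next
  case (Suc n)
  have "\<exists>k\<in>{1..N}. mat_pow N A n i k * A k j \<noteq> 0"
  proof (rule ccontr)
    assume "\<not> ?thesis"
    then have "(\<Sum>k\<in>{1..N}. mat_pow N A n i k * A k j) = 0" by (intro sum.neutral) blast
    with Suc.prems(2) show False by (metis mat_pow.simps(2) less_irrefl)
  qed
  then obtain k where k: "k \<in> {1..N}" "mat_pow N A n i k > 0" "A k j \<noteq> 0"
    by auto
  then have Akj: "A k j = 1" using zo k(1) Suc.prems(1) unfolding zero_one_matrix_def by metis
  obtain w where w: "w 0 = i" "w n = k" "\<forall>k\<le>n. w k \<in> {1..N}" "\<forall>k<n. A (w k) (w (Suc k)) = 1"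
    using Suc.IH[OF k(1) \<open>mat_pow N A n i k > 0\<close>] by blast
  show ?case
  proof (intro exI[of _ "w(Suc n := j)"] conjI allI impI)
    show "(w(Suc n := j)) 0 = i" using w by simp
    show "(w(Suc n := j)) (Suc n) = j" by simp
    fix m assume "m \<le> Suc n" then show "(w(Suc n := j)) m \<in> {1..N}"
      using w(3) Suc.prems(1) by (cases "m = Suc n") auto
  next
    fix m assume "m < Suc n" then show "A ((w(Suc n := j)) m) ((w(Suc n := j)) (Suc m)) = 1"
      using w(2,4) Akj by (cases "m = n") auto
  qed
qed

definition "MM = (SOME M. \<forall>i\<in>{1..N}. \<forall>j\<in>{1..N}. mat_pow N A M i j > 0)"

lemma MM: "i\<in>{1..N} \<Longrightarrow> j\<in>{1..N} \<Longrightarrow> mat_pow N A MM i j > 0"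
  using someI_ex[OF ap[unfolded aperiodic_def]] unfolding MM_def by blast

lemma MM_pos: "MM > 0"
proof (rule ccontr)
  assume "\<not> MM > 0"
  then have "MM = 0" by simp
  then have "mat_pow N A MM 1 2 = 0" by simp
  with MM[of 1 2] N2 show False by simp
qed

lemma path_ex:
  assumes "i \<in> {1..N}" "j \<in> {1..N}"
  obtains w where "w 0 = i" "w MM = j" "\<forall>k\<le>MM. w k \<in> {1..N}" "\<forall>k<MM. A (w k) (w (Suc k)) = 1"
  using mat_pow_path[OF assms MM[OF assms]] by blast

lemma succ_ex: "i \<in> {1..N} \<Longrightarrow> \<exists>j. j\<in>{1..N} \<and> A i j = 1"
proof -
  assume i: "i \<in> {1..N}"
  have "1 \<in> {1..N}" using N2 by simp
  from path_ex[OF i this] obtain w where w: "w 0 = i" "\<forall>k\<le>MM. w k \<in> {1..N}" "\<forall>k<MM. A (w k) (w (Suc k)) = 1"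
    by metis
  then show ?thesis using MM_pos by (intro exI[of _ "w 1"]) auto
qed

lemma pred_ex: "j \<in> {1..N} \<Longrightarrow> \<exists>i. i\<in>{1..N} \<and> A i j = 1"
proof -
  assume j: "j \<in> {1..N}"
  have "1 \<in> {1..N}" using N2 by simp
  from path_ex[OF this j] obtain w where w: "w MM = j" "\<forall>k\<le>MM. w k \<in> {1..N}" "\<forall>k<MM. A (w k) (w (Suc k)) = 1"
    by metis
  then show ?thesis using MM_pos
    by (intro exI[of _ "w (MM - 1)"]) (metis Suc_pred' diff_le_self diff_less less_numeral_extra(1))
qed

definition "sc i = (SOME j. j\<in>{1..N} \<and> A i j = 1)"

lemma sc: "i \<in> {1..N} \<Longrightarrow> sc i \<in> {1..N} \<and> A i (sc i) = 1"
  unfolding sc_def by (rule someI_ex[OF succ_ex])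

lemma sc_pow: "i \<in> {1..N} \<Longrightarrow> (sc ^^ m) i \<in> {1..N}"
proof (induction m)
  case (Suc m) then show ?case using sc[of "(sc^^m) i"] by simp
qed simp

definition "extp w n = (\<lambda>k. if k \<le> n then w k else (sc ^^ (k - n)) (w n))"

lemma extp_Sigma:
  assumes "\<forall>k\<le>n. w k \<in> {1..N}" "\<forall>k<n. A (w k) (w (Suc k)) = 1"
  shows "extp w n \<in> SS"
proof -
  have r: "extp w n k \<in> {1..N}" for k
    using assms(1) sc_pow[of "w n"] by (auto simp: extp_def)
  have s: "extp w n (Suc k) = sc (extp w n k)" if "k \<ge> n" for k
  proof -
    have "Suc k - n = Suc (k - n)" using that by simp
    then show ?thesis using that by (auto simp: extp_def)
  qed
  have "A (extp w n k) (extp w n (Suc k)) = 1" for k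
  proof (cases "k < n")
    case True then show ?thesis using assms(2) by (simp add: extp_def)
  next
    case False then show ?thesis using s[of k] sc r[of k] by simp
  qed
  then show ?thesis unfolding Sigma_A_def using r by auto
qed

lemma base_pair: "\<exists>\<eta> \<eta>' K. \<eta> \<in> SS \<and> \<eta>' \<in> SS \<and> 0 < K \<and> (\<forall>k<K. \<eta> k = \<eta>' k) \<and> \<eta> K \<noteq> \<eta>' K"
proof -
  have 1: "1 \<in> {1..N}" and 2: "2 \<in> {1..N}" using N2 by auto
  obtain p where p: "p 0 = 1" "p MM = 1" "\<forall>k\<le>MM. p k \<in> {1..N}" "\<forall>k<MM. A (p k) (p (Suc k)) = 1"
    using path_ex[OF 1 1] by metis
  obtain q where q: "q 0 = 1" "q MM = 2" "\<forall>k\<le>MM. q k \<in> {1..N}" "\<forall>k<MM. A (q k) (q (Suc k)) = 1"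
    using path_ex[OF 1 2] by metis
  define \<eta> where "\<eta> = extp p MM"
  define \<eta>' where "\<eta>' = extp q MM"
  have d: "\<eta> MM \<noteq> \<eta>' MM" using p q by (simp add: \<eta>_def \<eta>'_def extp_def)
  define K where "K = (LEAST k. \<eta> k \<noteq> \<eta>' k)"
  have "\<eta> K \<noteq> \<eta>' K" unfolding K_def by (rule LeastI[of _ MM]) (rule d)
  moreover have "\<forall>k<K. \<eta> k = \<eta>' k" unfolding K_def using not_less_Least by blast
  moreover have "\<eta> 0 = \<eta>' 0" using p q by (simp add: \<eta>_def \<eta>'_def extp_def)
  ultimately have "0 < K" by (metis gr0I)
  then show ?thesis
    using \<open>\<eta> K \<noteq> \<eta>' K\<close> \<open>\<forall>k<K. \<eta> k = \<eta>' k\<close> extp_Sigma[OF p(3,4)] extp_Sigma[OF q(3,4)]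
    unfolding \<eta>_def \<eta>'_def by blast
qed

lemma pairs: "\<exists>\<eta> \<eta>' K. \<eta> \<in> SS \<and> \<eta>' \<in> SS \<and> n < K \<and> (\<forall>k<K. \<eta> k = \<eta>' k) \<and> \<eta> K \<noteq> \<eta>' K"
proof (induction n)
  case 0 then show ?case using base_pair by blast
next
  case (Suc n)
  then obtain \<eta> \<eta>' K where h: "\<eta> \<in> SS" "\<eta>' \<in> SS" "n < K" "\<forall>k<K. \<eta> k = \<eta>' k" "\<eta> K \<noteq> \<eta>' K" by blast
  have e0: "\<eta> 0 = \<eta>' 0" using h by auto
  have "\<eta> 0 \<in> {1..N}" using h(1) unfolding Sigma_A_def by auto
  then obtain b where b: "b \<in> {1..N}" "A b (\<eta> 0) = 1" using pred_ex by blast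
  have "cons b \<eta> \<in> SS" "cons b \<eta>' \<in> SS" using cons_Sigma b h(1,2) e0 by auto
  moreover have "\<forall>k<Suc K. cons b \<eta> k = cons b \<eta>' k" using h(4) by (auto simp: cons_def split: nat.split)
  moreover have "cons b \<eta> (Suc K) \<noteq> cons b \<eta>' (Suc K)" using h(5) by simp
  ultimately show ?case using h(3) by (intro exI[of _ "cons b \<eta>"] exI[of _ "cons b \<eta>'"] exI[of _ "Suc K"]) auto
qed

lemma SS_ne: "SS \<noteq> {}" using base_pair by blast

end



context SFT begin

definition "PP = {(\<omega>,\<omega>'). \<omega>\<in>SS \<and> \<omega>'\<in>SS \<and> \<omega>\<noteq>\<omega>'}"
definition "rat \<theta> \<phi> p = cmod (\<phi> (fst p) - \<phi> (snd p)) / d_theta \<theta> (fst p) (snd p)"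

lemma lip_eq: "lip_const N A \<theta> \<phi> = (SUP p\<in>PP. rat \<theta> \<phi> p)"
  unfolding lip_const_def PP_def rat_def by simp

lemma sup_eq: "sup_norm N A \<phi> = (SUP \<omega>\<in>SS. cmod (\<phi> \<omega>))"
  by (simp add: sup_norm_def)

lemma PP_ne: "PP \<noteq> {}"
  using base_pair unfolding PP_def by blast

lemma fd:
  assumes "\<forall>k<K. \<omega> k = \<omega>' k" "\<omega> K \<noteq> \<omega>' K"
  shows "first_diff \<omega> \<omega>' = K"
  unfolding first_diff_def by (rule Least_equality) (use assms leI in blast)+

lemma fd_props:
  assumes "\<omega> \<noteq> \<omega>'"
  shows "\<forall>k<first_diff \<omega> \<omega>'. \<omega> k = \<omega>' k" "\<omega> (first_diff \<omega> \<omega>') \<noteq> \<omega>' (first_diff \<omega> \<omega>')"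
proof -
  obtain m where "\<omega> m \<noteq> \<omega>' m" using assms by (meson ext)
  then show "\<omega> (first_diff \<omega> \<omega>') \<noteq> \<omega>' (first_diff \<omega> \<omega>')"
    unfolding first_diff_def by (rule LeastI)
  show "\<forall>k<first_diff \<omega> \<omega>'. \<omega> k = \<omega>' k"
    unfolding first_diff_def using not_less_Least by blast
qed

lemma d_theta_eq: "\<omega> \<noteq> \<omega>' \<Longrightarrow> d_theta \<theta> \<omega> \<omega>' = \<theta> ^ first_diff \<omega> \<omega>'"
  by (simp add: d_theta_def)

lemma d_theta_pos: "\<omega> \<noteq> \<omega>' \<Longrightarrow> 0 < \<theta> \<Longrightarrow> 0 < d_theta \<theta> \<omega> \<omega>'"
  by (simp add: d_theta_def)

lemma rat_nonneg: "0 < \<theta> \<Longrightarrow> 0 \<le> rat \<theta> \<phi> p"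
  unfolding rat_def d_theta_def by auto

lemma rat_add:
  assumes "p \<in> PP" "0 < \<theta>"
  shows "rat \<theta> (\<lambda>x. a x + b x) p \<le> rat \<theta> a p + rat \<theta> b p"
proof -
  have d: "0 < d_theta \<theta> (fst p) (snd p)" using assms d_theta_pos unfolding PP_def by auto
  have "cmod (a (fst p) + b (fst p) - (a (snd p) + b (snd p))) \<le> cmod (a (fst p) - a (snd p)) + cmod (b (fst p) - b (snd p))"
    by (metis add_diff_add norm_triangle_ineq)
  then show ?thesis unfolding rat_def using d by (simp add: add_divide_distrib[symmetric] divide_right_mono)
qed

lemma rat_diff:
  assumes "p \<in> PP" "0 < \<theta>"
  shows "rat \<theta> (\<lambda>x. a x - b x) p \<le> rat \<theta> a p + rat \<theta> b p"
proof -
  have d: "0 < d_theta \<theta> (fst p) (snd p)" using assms d_theta_pos unfolding PP_def by auto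
  have "cmod (a (fst p) - b (fst p) - (a (snd p) - b (snd p))) \<le> cmod (a (fst p) - a (snd p)) + cmod (b (fst p) - b (snd p))"
  proof -
    have "a (fst p) - b (fst p) - (a (snd p) - b (snd p)) = (a (fst p) - a (snd p)) - (b (fst p) - b (snd p))"
      by simp
    then show ?thesis using norm_triangle_ineq4 by metis
  qed
  then show ?thesis unfolding rat_def using d by (simp add: add_divide_distrib[symmetric] divide_right_mono)
qed

definition "GOOD \<theta> \<phi> \<longleftrightarrow> bdd_above (rat \<theta> \<phi> ` PP) \<and> bdd_above ((\<lambda>\<omega>. cmod (\<phi> \<omega>)) ` SS)"

lemma GOOD_add:
  assumes "GOOD \<theta> a" "GOOD \<theta> b" "0 < \<theta>"
  shows "GOOD \<theta> (\<lambda>x. a x + b x)"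
proof -
  obtain B1 where B1: "\<forall>p\<in>PP. rat \<theta> a p \<le> B1" using assms(1) unfolding GOOD_def bdd_above_def by auto
  obtain B2 where B2: "\<forall>p\<in>PP. rat \<theta> b p \<le> B2" using assms(2) unfolding GOOD_def bdd_above_def by auto
  obtain B3 where B3: "\<forall>x\<in>SS. cmod (a x) \<le> B3" using assms(1) unfolding GOOD_def bdd_above_def by auto
  obtain B4 where B4: "\<forall>x\<in>SS. cmod (b x) \<le> B4" using assms(2) unfolding GOOD_def bdd_above_def by auto
  note B = B1 B2 B3 B4
  have "\<forall>p\<in>PP. rat \<theta> (\<lambda>x. a x + b x) p \<le> B1 + B2"
    using B rat_add[OF _ assms(3)] by (meson add_mono order_trans)
  moreover have "\<forall>x\<in>SS. cmod (a x + b x) \<le> B3 + B4"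
    using B by (meson add_mono norm_triangle_ineq order_trans)
  ultimately show ?thesis unfolding GOOD_def by (auto intro: bdd_aboveI2)
qed

lemma GOOD_diff:
  assumes "GOOD \<theta> a" "GOOD \<theta> b" "0 < \<theta>"
  shows "GOOD \<theta> (\<lambda>x. a x - b x)"
proof -
  obtain B1 where B1: "\<forall>p\<in>PP. rat \<theta> a p \<le> B1" using assms(1) unfolding GOOD_def bdd_above_def by auto
  obtain B2 where B2: "\<forall>p\<in>PP. rat \<theta> b p \<le> B2" using assms(2) unfolding GOOD_def bdd_above_def by auto
  obtain B3 where B3: "\<forall>x\<in>SS. cmod (a x) \<le> B3" using assms(1) unfolding GOOD_def bdd_above_def by auto
  obtain B4 where B4: "\<forall>x\<in>SS. cmod (b x) \<le> B4" using assms(2) unfolding GOOD_def bdd_above_def by auto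
  note B = B1 B2 B3 B4
  have "\<forall>p\<in>PP. rat \<theta> (\<lambda>x. a x - b x) p \<le> B1 + B2"
    using B rat_diff[OF _ assms(3)] by (meson add_mono order_trans)
  moreover have "\<forall>x\<in>SS. cmod (a x - b x) \<le> B3 + B4"
    using B by (meson add_mono norm_triangle_ineq4 order_trans)
  ultimately show ?thesis unfolding GOOD_def by (auto intro: bdd_aboveI2)
qed

lemma rat_le_lip: "GOOD \<theta> \<phi> \<Longrightarrow> p \<in> PP \<Longrightarrow> rat \<theta> \<phi> p \<le> lip_const N A \<theta> \<phi>"
  unfolding lip_eq GOOD_def by (auto intro: cSUP_upper)

lemma sup_nonneg: "GOOD \<theta> \<phi> \<Longrightarrow> 0 \<le> sup_norm N A \<phi>"
proof -
  assume g: "GOOD \<theta> \<phi>"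
  obtain \<omega> where "\<omega> \<in> SS" using SS_ne by blast
  then have "cmod (\<phi> \<omega>) \<le> sup_norm N A \<phi>" using g unfolding sup_eq GOOD_def by (auto intro: cSUP_upper)
  then show ?thesis by (meson norm_ge_zero order_trans)
qed

lemma lip_le_norm: "GOOD \<theta> \<phi> \<Longrightarrow> lip_const N A \<theta> \<phi> \<le> theta_norm N A \<theta> \<phi>"
  unfolding theta_norm_def using sup_nonneg by auto

lemma tri:
  assumes "GOOD \<theta> a" "GOOD \<theta> b" "0 < \<theta>"
  shows "theta_norm N A \<theta> (\<lambda>x. a x + b x) \<le> theta_norm N A \<theta> a + theta_norm N A \<theta> b"
proof -
  have "sup_norm N A (\<lambda>x. a x + b x) \<le> sup_norm N A a + sup_norm N A b"
    unfolding sup_eq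
  proof (rule cSUP_least[OF SS_ne])
    fix x assume x: "x \<in> SS"
    have "cmod (a x) \<le> (SUP \<omega>\<in>SS. cmod (a \<omega>))" "cmod (b x) \<le> (SUP \<omega>\<in>SS. cmod (b \<omega>))"
      using assms x unfolding GOOD_def by (auto intro: cSUP_upper)
    then show "cmod (a x + b x) \<le> (SUP \<omega>\<in>SS. cmod (a \<omega>)) + (SUP \<omega>\<in>SS. cmod (b \<omega>))"
      by (meson add_mono norm_triangle_ineq order_trans)
  qed
  moreover have "lip_const N A \<theta> (\<lambda>x. a x + b x) \<le> lip_const N A \<theta> a + lip_const N A \<theta> b"
    unfolding lip_eq[of _ "\<lambda>x. a x + b x"]
  proof (rule cSUP_least[OF PP_ne])
    fix p assume p: "p \<in> PP"
    show "rat \<theta> (\<lambda>x. a x + b x) p \<le> lip_const N A \<theta> a + lip_const N A \<theta> b"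
      using rat_add[OF p assms(3), of a b] rat_le_lip[OF assms(1) p] rat_le_lip[OF assms(2) p] by linarith
  qed
  ultimately show ?thesis unfolding theta_norm_def by linarith
qed

lemma var_upper:
  assumes "bounded (\<phi> ` SS)" "\<omega>\<in>SS" "\<omega>'\<in>SS" "\<forall>k<m. \<omega> k = \<omega>' k"
  shows "cmod (\<phi> \<omega> - \<phi> \<omega>') \<le> var N A m \<phi>"
proof -
  obtain B where B: "\<forall>x\<in>SS. cmod (\<phi> x) \<le> B" using assms(1) unfolding bounded_iff by auto
  let ?Q = "{(\<omega>, \<omega>'). \<omega> \<in> SS \<and> \<omega>' \<in> SS \<and> (\<forall>k<m. \<omega> k = \<omega>' k)}"
  have "bdd_above ((\<lambda>p. cmod (\<phi> (fst p) - \<phi> (snd p))) ` ?Q)"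
  proof (rule bdd_aboveI2)
    fix p assume "p \<in> ?Q"
    then obtain x y where xy: "p = (x,y)" "x\<in>SS" "y\<in>SS" by auto
    then have "cmod (\<phi> x) \<le> B" "cmod (\<phi> y) \<le> B" using B by auto
    then show "cmod (\<phi> (fst p) - \<phi> (snd p)) \<le> B + B"
      using xy(1) norm_triangle_ineq4[of "\<phi> x" "\<phi> y"] by simp
  qed
  moreover have "(\<omega>,\<omega>') \<in> ?Q" using assms by auto
  ultimately show ?thesis unfolding var_def
    using cSUP_upper[of "(\<omega>,\<omega>')" ?Q "\<lambda>p. cmod (\<phi> (fst p) - \<phi> (snd p))"] by simp
qed

lemma var_nonneg: "bounded (\<phi> ` SS) \<Longrightarrow> 0 \<le> var N A m \<phi>"
proof -
  assume b: "bounded (\<phi> ` SS)"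
  obtain \<omega> where "\<omega> \<in> SS" using SS_ne by blast
  from var_upper[OF b this this] show ?thesis by simp
qed

lemma var_le:
  assumes "\<And>\<omega> \<omega>'. \<omega>\<in>SS \<Longrightarrow> \<omega>'\<in>SS \<Longrightarrow> \<forall>k<m. \<omega> k = \<omega>' k \<Longrightarrow> cmod (\<phi> \<omega> - \<phi> \<omega>') \<le> C"
  shows "var N A m \<phi> \<le> C"
proof -
  obtain \<omega> where w: "\<omega> \<in> SS" using SS_ne by blast
  let ?Q = "{(\<omega>, \<omega>'). \<omega> \<in> SS \<and> \<omega>' \<in> SS \<and> (\<forall>k<m. \<omega> k = \<omega>' k)}"
  have "?Q \<noteq> {}" using w by auto
  then show ?thesis unfolding var_def by (rule cSUP_least) (use assms in auto)
qed

lemma V_intro: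
  assumes fV: "f \<in> Vspace N A" and z: "\<forall>\<omega>. \<omega> \<notin> SS \<longrightarrow> \<phi> \<omega> = 0" and b: "bounded (\<phi> ` SS)"
    and C: "C \<ge> 0"
    and h: "\<And>m \<omega> \<omega>'. m \<ge> m0 \<Longrightarrow> \<omega>\<in>SS \<Longrightarrow> \<omega>'\<in>SS \<Longrightarrow> (\<forall>k<m. \<omega> k = \<omega>' k)
              \<Longrightarrow> cmod (\<phi> \<omega> - \<phi> \<omega>') \<le> C * var N A (Suc m) f"
  shows "\<phi> \<in> Vspace N A"
proof -
  define v where "v m = var N A m f" for m
  have fb: "bounded (f ` SS)" and flim: "(\<lambda>m. v m powr (1/real m)) \<longlonglongrightarrow> 0"
    using fV unfolding Vspace_def v_def by auto
  have vnn: "0 \<le> v m" for m unfolding v_def using var_nonneg[OF fb] .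
  have le: "var N A m \<phi> \<le> C * v (Suc m)" if "m \<ge> m0" for m
    unfolding v_def by (rule var_le) (use h that in auto)
  have g: "(\<lambda>m. (C * v (Suc m)) powr (1/real m)) \<longlonglongrightarrow> 0"
  proof (cases "C = 0")
    case True then show ?thesis by simp
  next
    case False
    then have Cp: "C > 0" using C by simp
    have e: "(C * v (Suc m)) powr (1/real m) =
        C powr (1/real m) * ((v (Suc m) powr (1/real (Suc m))) powr (real (Suc m) / real m))" for m
    proof -
      have "(1/real (Suc m)) * (real (Suc m) / real m) = 1 / real m" by simp
      then show ?thesis using C vnn[of "Suc m"] by (simp add: powr_mult powr_powr)
    qed
    have 1: "(\<lambda>m. C powr (1/real m)) \<longlonglongrightarrow> C powr 0"
      by (rule tendsto_powr) (use Cp lim_1_over_n in auto)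
    have 2: "(\<lambda>m. (v (Suc m) powr (1/real (Suc m))) powr (real (Suc m) / real m)) \<longlonglongrightarrow> 0"
      by (rule tendsto_zero_powrI[OF LIMSEQ_Suc[OF flim] LIMSEQ_Suc_n_over_n]) auto
    show ?thesis unfolding e using tendsto_mult[OF 1 2] by simp
  qed
  have "(\<lambda>m. var N A m \<phi> powr (1/real m)) \<longlonglongrightarrow> 0"
  proof (rule Lim_null_comparison[OF _ g])
    show "\<forall>\<^sub>F m in sequentially. norm (var N A m \<phi> powr (1/real m)) \<le> (C * v (Suc m)) powr (1/real m)"
      unfolding eventually_sequentially
      by (rule exI[of _ m0]) (auto intro!: powr_mono2 le var_nonneg[OF b])
  qed
  then show ?thesis unfolding Vspace_def using z b by auto
qed

lemma V_GOOD:
  assumes V: "\<phi> \<in> Vspace N A" and th: "0 < \<theta>" "\<theta> < 1"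
  shows "GOOD \<theta> \<phi>"
proof -
  have b: "bounded (\<phi> ` SS)" and lim: "(\<lambda>m. var N A m \<phi> powr (1/real m)) \<longlonglongrightarrow> 0"
    using V unfolding Vspace_def by auto
  obtain B where B: "\<forall>x\<in>SS. cmod (\<phi> x) \<le> B" using b unfolding bounded_iff by auto
  have "\<forall>\<^sub>F m in sequentially. var N A m \<phi> powr (1/real m) < \<theta>"
    using order_tendstoD(2)[OF lim th(1)] .
  then obtain m0 where m0: "\<And>m. m \<ge> m0 \<Longrightarrow> var N A m \<phi> powr (1/real m) < \<theta>"
    unfolding eventually_sequentially by blast
  have vsmall: "var N A m \<phi> \<le> \<theta> ^ m" if "m \<ge> Suc m0" for m
  proof -
    have v0: "0 \<le> var N A m \<phi>" by (rule var_nonneg[OF b])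
    show ?thesis
    proof (cases "var N A m \<phi> = 0")
      case True then show ?thesis using th by simp
    next
      case False
      have m: "m > 0" using that by simp
      have "var N A m \<phi> = (var N A m \<phi> powr (1/real m)) powr (real m)"
        using m False v0 by (simp add: powr_powr)
      also have "\<dots> \<le> \<theta> powr (real m)"
        using m0[of m] that by (intro powr_mono2) auto
      also have "\<dots> = \<theta> ^ m" using th by (simp add: powr_realpow)
      finally show ?thesis .
    qed
  qed
  have Bnn: "0 \<le> B" using B SS_ne by (meson all_not_in_conv norm_ge_zero order_trans)
  have "\<forall>p\<in>PP. rat \<theta> \<phi> p \<le> 1 + 2 * B / \<theta> ^ Suc m0"
  proof
    fix p assume p: "p \<in> PP"
    obtain \<omega> \<omega>' where pe: "p = (\<omega>,\<omega>')" "\<omega>\<in>SS" "\<omega>'\<in>SS" "\<omega>\<noteq>\<omega>'" using p unfolding PP_def by auto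
    define k where "k = first_diff \<omega> \<omega>'"
    have d: "d_theta \<theta> \<omega> \<omega>' = \<theta> ^ k" unfolding k_def by (rule d_theta_eq[OF pe(4)])
    have tk: "0 < \<theta> ^ k" using th by simp
    have ag: "\<forall>j<k. \<omega> j = \<omega>' j" using fd_props(1)[OF pe(4)] k_def by simp
    have r: "rat \<theta> \<phi> p = cmod (\<phi> \<omega> - \<phi> \<omega>') / \<theta> ^ k" unfolding rat_def pe by (simp add: d)
    show "rat \<theta> \<phi> p \<le> 1 + 2 * B / \<theta> ^ Suc m0"
    proof (cases "k \<ge> Suc m0")
      case True
      have "cmod (\<phi> \<omega> - \<phi> \<omega>') \<le> \<theta> ^ k"
        using var_upper[OF b pe(2,3) ag] vsmall[OF True] by linarith
      then have "rat \<theta> \<phi> p \<le> 1" unfolding r using tk by simp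
      moreover have "0 \<le> 2 * B / \<theta> ^ Suc m0" using Bnn th by simp
      ultimately show ?thesis by linarith
    next
      case False
      have c: "cmod (\<phi> \<omega> - \<phi> \<omega>') \<le> 2 * B"
      proof -
        have "cmod (\<phi> \<omega>) \<le> B" "cmod (\<phi> \<omega>') \<le> B" using B pe(2,3) by auto
        then show ?thesis using norm_triangle_ineq4[of "\<phi> \<omega>" "\<phi> \<omega>'"] by simp
      qed
      have "\<theta> ^ Suc m0 \<le> \<theta> ^ k" using False th by (intro power_decreasing) auto
      then have "cmod (\<phi> \<omega> - \<phi> \<omega>') / \<theta> ^ k \<le> 2 * B / \<theta> ^ Suc m0"
        using c tk Bnn th by (intro frac_le) auto
      then show ?thesis unfolding r by linarith
    qed
  qed
  then have "bdd_above (rat \<theta> \<phi> ` PP)" by (auto intro: bdd_aboveI2)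
  moreover have "bdd_above ((\<lambda>\<omega>. cmod (\<phi> \<omega>)) ` SS)" using B by (auto intro: bdd_aboveI2)
  ultimately show ?thesis unfolding GOOD_def by simp
qed

lemma exp_lip:
  fixes u v :: complex
  assumes "cmod u \<le> R" "cmod v \<le> R"
  shows "cmod (exp u - exp v) \<le> exp R * cmod (u - v)"
proof (rule field_differentiable_bound[of "cball 0 R" exp exp "exp R"])
  show "convex (cball (0::complex) R)" by simp
  fix z :: complex assume z: "z \<in> cball 0 R"
  show "(exp has_field_derivative exp z) (at z within cball 0 R)"
    by (rule has_field_derivative_at_within) (rule DERIV_exp)
  have "cmod (exp z) \<le> exp (cmod z)" by (rule norm_exp)
  also have "\<dots> \<le> exp R" using z by simp
  finally show "cmod (exp z) \<le> exp R" .
next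
  show "u \<in> cball 0 R" "v \<in> cball 0 R" using assms by auto
qed

end



context SFT begin

definition "psi a s K c = (\<lambda>\<zeta>. if \<zeta> \<in> SS \<and> \<zeta> 0 = a \<and> \<zeta> (Suc K) = s then complex_of_real c else 0)"

lemma L_psi:
  assumes a: "a \<in> {1..N}" and z: "\<zeta> \<in> SS"
  shows "transfer_op N A f (psi a s K c) \<zeta> =
    (if A a (\<zeta> 0) = 1 \<and> \<zeta> K = s then exp (f (cons a \<zeta>)) * complex_of_real c else 0)"
proof -
  let ?S = "{\<zeta>' \<in> SS. shift \<zeta>' = \<zeta>}"
  have sub: "?S \<subseteq> (\<lambda>b. cons b \<zeta>) ` {1..N}"
  proof
    fix \<zeta>' assume h: "\<zeta>' \<in> ?S"
    then have "\<zeta>' = cons (\<zeta>' 0) \<zeta>" using cons_shift[of \<zeta>'] by auto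
    moreover have "\<zeta>' 0 \<in> {1..N}" using h unfolding Sigma_A_def by auto
    ultimately show "\<zeta>' \<in> (\<lambda>b. cons b \<zeta>) ` {1..N}" by blast
  qed
  have fin: "finite ?S" using finite_subset[OF sub] by simp
  define v where "v = exp (f (cons a \<zeta>)) * (if \<zeta> K = s then complex_of_real c else 0)"
  have eq: "exp (f \<zeta>') * psi a s K c \<zeta>' = (if \<zeta>' = cons a \<zeta> then v else 0)" if "\<zeta>' \<in> ?S" for \<zeta>'
  proof (cases "\<zeta>' = cons a \<zeta>")
    case True then show ?thesis using that by (simp add: psi_def v_def)
  next
    case False
    have "\<zeta>' = cons (\<zeta>' 0) \<zeta>" using that cons_shift[of \<zeta>'] by auto
    then have "\<zeta>' 0 \<noteq> a" using False by metis
    then show ?thesis using False by (simp add: psi_def)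
  qed
  have mem: "cons a \<zeta> \<in> ?S \<longleftrightarrow> A a (\<zeta> 0) = 1"
  proof
    assume "cons a \<zeta> \<in> ?S"
    then have "A (cons a \<zeta> 0) (cons a \<zeta> (Suc 0)) = 1" unfolding Sigma_A_def by blast
    then show "A a (\<zeta> 0) = 1" by simp
  next
    assume "A a (\<zeta> 0) = 1" then show "cons a \<zeta> \<in> ?S" using cons_Sigma[OF z a] by simp
  qed
  have "(\<Sum>\<zeta>'\<in>?S. exp (f \<zeta>') * psi a s K c \<zeta>') = (\<Sum>\<zeta>'\<in>?S. if \<zeta>' = cons a \<zeta> then v else 0)"
    by (rule sum.cong) (use eq in auto)
  also have "\<dots> = (if cons a \<zeta> \<in> ?S then v else 0)"
    using fin by simp
  finally show ?thesis unfolding transfer_op_def using z mem by (auto simp: v_def)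
qed

lemma psi_vals: "psi a s K c \<zeta> = 0 \<or> psi a s K c \<zeta> = complex_of_real c"
  by (simp add: psi_def)

lemma psi_V:
  assumes fV: "f \<in> Vspace N A"
  shows "psi a s K c \<in> Vspace N A"
proof (rule V_intro[OF fV, of _ 0 "Suc (Suc K)"])
  show "\<forall>\<omega>. \<omega> \<notin> SS \<longrightarrow> psi a s K c \<omega> = 0" by (simp add: psi_def)
  have "psi a s K c ` SS \<subseteq> {0, complex_of_real c}" using psi_vals by blast
  then show "bounded (psi a s K c ` SS)" by (rule bounded_subset[rotated]) simp
  fix m \<omega> \<omega>' assume "Suc (Suc K) \<le> m" "\<omega> \<in> SS" "\<omega>' \<in> SS" "\<forall>k<m. \<omega> k = \<omega>' k"
  then have "\<omega> 0 = \<omega>' 0" "\<omega> (Suc K) = \<omega>' (Suc K)" by auto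
  then show "cmod (psi a s K c \<omega> - psi a s K c \<omega>') \<le> 0 * var N A (Suc m) f"
    using \<open>\<omega> \<in> SS\<close> \<open>\<omega>' \<in> SS\<close> by (simp add: psi_def)
qed simp

lemma psi_norm:
  assumes th: "0 < \<theta>" "\<theta> < 1" and c: "0 \<le> c"
  shows "theta_norm N A \<theta> (psi a s K c) \<le> c + c / \<theta> ^ Suc K"
proof -
  have cm: "cmod (psi a s K c x - psi a s K c y) \<le> c" for x y
    using psi_vals[of a s K c x] psi_vals[of a s K c y] c by (auto simp: norm_minus_commute)
  have "sup_norm N A (psi a s K c) \<le> c"
    unfolding sup_eq
  proof (rule cSUP_least[OF SS_ne])
    fix x show "cmod (psi a s K c x) \<le> c" using psi_vals[of a s K c x] c by auto
  qed
  moreover have "lip_const N A \<theta> (psi a s K c) \<le> c / \<theta> ^ Suc K"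
    unfolding lip_eq
  proof (rule cSUP_least[OF PP_ne])
    fix p assume p: "p \<in> PP"
    obtain \<omega> \<omega>' where pe: "p = (\<omega>,\<omega>')" "\<omega>\<in>SS" "\<omega>'\<in>SS" "\<omega>\<noteq>\<omega>'" using p unfolding PP_def by auto
    define k where "k = first_diff \<omega> \<omega>'"
    have d: "d_theta \<theta> \<omega> \<omega>' = \<theta> ^ k" unfolding k_def by (rule d_theta_eq[OF pe(4)])
    have ag: "\<forall>j<k. \<omega> j = \<omega>' j" using fd_props(1)[OF pe(4)] k_def by simp
    have r: "rat \<theta> (psi a s K c) p = cmod (psi a s K c \<omega> - psi a s K c \<omega>') / \<theta> ^ k"
      unfolding rat_def pe by (simp add: d)
    have nn: "0 \<le> c / \<theta> ^ Suc K" using c th by simp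
    show "rat \<theta> (psi a s K c) p \<le> c / \<theta> ^ Suc K"
    proof (cases "k \<ge> Suc (Suc K)")
      case True
      then have "\<omega> 0 = \<omega>' 0" "\<omega> (Suc K) = \<omega>' (Suc K)" using ag by auto
      then have "psi a s K c \<omega> = psi a s K c \<omega>'" using pe(2,3) by (simp add: psi_def)
      then show ?thesis unfolding r using nn by simp
    next
      case False
      have "\<theta> ^ Suc K \<le> \<theta> ^ k" using False th by (intro power_decreasing) auto
      then show ?thesis unfolding r using cm[of \<omega> \<omega>'] th c by (intro frac_le) auto
    qed
  qed
  ultimately show ?thesis unfolding theta_norm_def by linarith
qed

lemma Lpsi_V:
  assumes fV: "f \<in> Vspace N A" and a: "a \<in> {1..N}" and R: "\<forall>\<omega>\<in>SS. cmod (f \<omega>) \<le> R" and c: "0 \<le> c"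
  shows "transfer_op N A f (psi a s K c) \<in> Vspace N A"
proof -
  let ?g = "transfer_op N A f (psi a s K c)"
  have fb: "bounded (f ` SS)" using fV unfolding Vspace_def by auto
  have ex: "cmod (exp (f x)) \<le> exp R" if "x \<in> SS" for x
  proof -
    have "cmod (f x) \<le> R" using R that by blast
    then have "exp (cmod (f x)) \<le> exp R" by simp
    then show ?thesis using norm_exp[of "f x"] by linarith
  qed
  show ?thesis
  proof (rule V_intro[OF fV, of _ "c * exp R" "Suc K"])
    show "\<forall>\<omega>. \<omega> \<notin> SS \<longrightarrow> ?g \<omega> = 0" by (simp add: transfer_op_def)
    have "cmod (?g \<zeta>) \<le> exp R * c" if "\<zeta> \<in> SS" for \<zeta>
    proof (cases "A a (\<zeta> 0) = 1 \<and> \<zeta> K = s")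
      case True
      then have "cons a \<zeta> \<in> SS" using cons_Sigma[OF that a] by simp
      then show ?thesis using L_psi[OF a that, of f s K c] True ex[of "cons a \<zeta>"] c
        by (simp add: norm_mult mult_right_mono)
    next
      case False then show ?thesis using L_psi[OF a that, of f s K c] c by auto
    qed
    then show "bounded (?g ` SS)" unfolding bounded_iff by blast
    show "0 \<le> c * exp R" using c by simp
    fix m \<omega> \<omega>' assume m: "Suc K \<le> m" and w: "\<omega> \<in> SS" "\<omega>' \<in> SS" and ag: "\<forall>k<m. \<omega> k = \<omega>' k"
    then have e: "\<omega> 0 = \<omega>' 0" "\<omega> K = \<omega>' K" by auto
    show "cmod (?g \<omega> - ?g \<omega>') \<le> c * exp R * var N A (Suc m) f"
    proof (cases "A a (\<omega> 0) = 1 \<and> \<omega> K = s")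
      case True
      then have c1: "cons a \<omega> \<in> SS" "cons a \<omega>' \<in> SS" using cons_Sigma[OF w(1) a] cons_Sigma[OF w(2) a] e by auto
      have ag2: "\<forall>k<Suc m. cons a \<omega> k = cons a \<omega>' k" using ag by (auto simp: cons_def split: nat.split)
      have "?g \<omega> - ?g \<omega>' = (exp (f (cons a \<omega>)) - exp (f (cons a \<omega>'))) * complex_of_real c"
        using L_psi[OF a w(1), of f s K c] L_psi[OF a w(2), of f s K c] True e by (simp add: algebra_simps)
      then have "cmod (?g \<omega> - ?g \<omega>') = cmod (exp (f (cons a \<omega>)) - exp (f (cons a \<omega>'))) * c"
        using c by (simp add: norm_mult)
      also have "\<dots> \<le> (exp R * cmod (f (cons a \<omega>) - f (cons a \<omega>'))) * c"
        using exp_lip[of "f (cons a \<omega>)" R "f (cons a \<omega>')"] R c1 c by (intro mult_right_mono) auto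
      also have "\<dots> \<le> (exp R * var N A (Suc m) f) * c"
        using var_upper[OF fb c1 ag2] c by (intro mult_right_mono) auto
      finally show ?thesis by (simp add: algebra_simps)
    next
      case False
      then have "?g \<omega> = 0" "?g \<omega>' = 0" using L_psi[OF a w(1), of f s K c] L_psi[OF a w(2), of f s K c] e by auto
      then show ?thesis using c var_nonneg[OF fb] by simp
    qed
  qed
qed

lemma Lpsi_pair:
  assumes a: "a \<in> {1..N}" and R: "\<forall>\<omega>\<in>SS. cmod (f \<omega>) \<le> R" and c: "0 \<le> c" and th: "0 < \<theta>"
    and h: "\<eta> \<in> SS" "\<eta>' \<in> SS" "\<forall>k<K. \<eta> k = \<eta>' k" "\<eta> K \<noteq> \<eta>' K" "A a (\<eta> 0) = 1"
  shows "exp (- R) * c / \<theta> ^ K \<le> rat \<theta> (transfer_op N A f (psi a (\<eta> K) K c)) (\<eta>, \<eta>')"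
proof -
  let ?g = "transfer_op N A f (psi a (\<eta> K) K c)"
  have neq: "\<eta> \<noteq> \<eta>'" using h(4) by auto
  have d: "d_theta \<theta> \<eta> \<eta>' = \<theta> ^ K" using d_theta_eq[OF neq] fd[OF h(3,4)] by simp
  have g1: "?g \<eta> = exp (f (cons a \<eta>)) * complex_of_real c" using L_psi[OF a h(1)] h(5) by simp
  have g2: "?g \<eta>' = 0" using L_psi[OF a h(2)] h(4) by auto
  have cs: "cons a \<eta> \<in> SS" using cons_Sigma[OF h(1) a h(5)] .
  have "cmod (f (cons a \<eta>)) \<le> R" using R cs by blast
  then have "- R \<le> Re (f (cons a \<eta>))"
    using abs_Re_le_cmod[of "f (cons a \<eta>)"] by linarith
  then have "exp (- R) \<le> exp (Re (f (cons a \<eta>)))" by simp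
  then have "exp (- R) * c \<le> cmod (?g \<eta> - ?g \<eta>')"
    unfolding g1 g2 using c by (simp add: norm_mult mult_right_mono)
  then show ?thesis unfolding rat_def using d th by (simp add: divide_right_mono)
qed

lemma zero_norm: "theta_norm N A \<theta> (\<lambda>_. 0) = 0"
proof -
  have "sup_norm N A (\<lambda>_. 0) = 0" unfolding sup_eq using SS_ne by simp
  moreover have "lip_const N A \<theta> (\<lambda>_. 0) = 0" unfolding lip_eq rat_def using PP_ne by simp
  ultimately show ?thesis unfolding theta_norm_def by simp
qed

abbreviation "BB \<equiv> {{\<psi> \<in> Vspace N A. theta_norm N A \<theta> (\<psi> - \<phi>) < \<epsilon>} | \<phi> \<theta> \<epsilon>.
        \<phi> \<in> Vspace N A \<and> 0 < \<theta> \<and> \<theta> < 1 \<and> 0 < \<epsilon>}"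

lemma top_V: "topspace (V_topology N A) = Vspace N A"
proof -
  have "\<Union>BB \<subseteq> Vspace N A" by auto
  moreover have "Vspace N A \<subseteq> \<Union>BB"
  proof
    fix g assume g: "g \<in> Vspace N A"
    have "g - g = (\<lambda>_. 0)" by (simp add: fun_eq_iff)
    then have "g \<in> {\<psi> \<in> Vspace N A. theta_norm N A (1/2) (\<psi> - g) < 1}" using g zero_norm by simp
    moreover have "{\<psi> \<in> Vspace N A. theta_norm N A (1/2) (\<psi> - g) < 1} \<in> BB"
      using g by (intro CollectI exI[of _ g] exI[of _ "1/2::real"] exI[of _ "1::real"]) auto
    ultimately show "g \<in> \<Union>BB" by blast
  qed
  ultimately show ?thesis unfolding V_topology_def by simp
qed

lemma NB:
  assumes "generate_topology_on BB s" "(\<lambda>_. 0) \<in> s"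
  shows "\<exists>F. finite F \<and> (\<forall>(\<theta>,\<epsilon>)\<in>F. 0<\<theta> \<and> \<theta><1 \<and> 0<\<epsilon>)
           \<and> (\<forall>\<psi>\<in>Vspace N A. (\<forall>(\<theta>,\<epsilon>)\<in>F. theta_norm N A \<theta> \<psi> < \<epsilon>) \<longrightarrow> \<psi> \<in> s)"
  using assms
proof (induction rule: generate_topology_on.induct)
  case Empty then show ?case by simp
next
  case (Int a b)
  have ha: "(\<lambda>_. 0) \<in> a" "(\<lambda>_. 0) \<in> b" using Int.prems by auto
  obtain F1 where F1: "finite F1" "\<forall>(\<theta>,\<epsilon>)\<in>F1. 0<\<theta> \<and> \<theta><1 \<and> 0<\<epsilon>"
      "\<forall>\<psi>\<in>Vspace N A. (\<forall>(\<theta>,\<epsilon>)\<in>F1. theta_norm N A \<theta> \<psi> < \<epsilon>) \<longrightarrow> \<psi> \<in> a"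
    using Int.IH(1)[OF ha(1)] by blast
  obtain F2 where F2: "finite F2" "\<forall>(\<theta>,\<epsilon>)\<in>F2. 0<\<theta> \<and> \<theta><1 \<and> 0<\<epsilon>"
      "\<forall>\<psi>\<in>Vspace N A. (\<forall>(\<theta>,\<epsilon>)\<in>F2. theta_norm N A \<theta> \<psi> < \<epsilon>) \<longrightarrow> \<psi> \<in> b"
    using Int.IH(2)[OF ha(2)] by blast
  have "finite (F1 \<union> F2)" using F1(1) F2(1) by simp
  moreover have "\<forall>(\<theta>,\<epsilon>)\<in>F1 \<union> F2. 0<\<theta> \<and> \<theta><1 \<and> 0<\<epsilon>" using F1(2) F2(2) by blast
  moreover have "\<forall>\<psi>\<in>Vspace N A. (\<forall>(\<theta>,\<epsilon>)\<in>F1 \<union> F2. theta_norm N A \<theta> \<psi> < \<epsilon>) \<longrightarrow> \<psi> \<in> a \<inter> b"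
  proof (intro ballI impI)
    fix \<psi> assume "\<psi> \<in> Vspace N A" "\<forall>(\<theta>,\<epsilon>)\<in>F1 \<union> F2. theta_norm N A \<theta> \<psi> < \<epsilon>"
    then show "\<psi> \<in> a \<inter> b" using F1(3) F2(3) by blast
  qed
  ultimately show ?case by blast
next
  case (UN K)
  then obtain k where k: "k \<in> K" "(\<lambda>_. 0) \<in> k" by auto
  obtain F where F: "finite F" "\<forall>(\<theta>,\<epsilon>)\<in>F. 0<\<theta> \<and> \<theta><1 \<and> 0<\<epsilon>"
      "\<forall>\<psi>\<in>Vspace N A. (\<forall>(\<theta>,\<epsilon>)\<in>F. theta_norm N A \<theta> \<psi> < \<epsilon>) \<longrightarrow> \<psi> \<in> k"
    using UN.IH[OF k] by blast
  have "\<forall>\<psi>\<in>Vspace N A. (\<forall>(\<theta>,\<epsilon>)\<in>F. theta_norm N A \<theta> \<psi> < \<epsilon>) \<longrightarrow> \<psi> \<in> \<Union>K"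
    using F(3) k(1) by blast
  then show ?case using F(1,2) by blast
next
  case (Basis s)
  have "\<exists>\<phi> \<theta> \<epsilon>. s = {\<psi> \<in> Vspace N A. theta_norm N A \<theta> (\<psi> - \<phi>) < \<epsilon>} \<and>
     \<phi> \<in> Vspace N A \<and> 0 < \<theta> \<and> \<theta> < 1 \<and> 0 < \<epsilon>" using Basis.hyps by (simp only: mem_Collect_eq)
  then obtain \<phi> \<theta> \<epsilon> where s: "s = {\<psi> \<in> Vspace N A. theta_norm N A \<theta> (\<psi> - \<phi>) < \<epsilon>}"
    and p: "\<phi> \<in> Vspace N A" "0 < \<theta>" "\<theta> < 1" "0 < \<epsilon>" by blast
  define t0 where "t0 = theta_norm N A \<theta> ((\<lambda>_. 0) - \<phi>)"
  have t0: "t0 < \<epsilon>" using Basis.prems s t0_def by simp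
  have Gphi: "GOOD \<theta> \<phi>" using V_GOOD[OF p(1) p(2,3)] .
  have G0: "GOOD \<theta> (\<lambda>_. 0)"
    unfolding GOOD_def rat_def by (auto intro!: bdd_aboveI2[where M=0])
  have Gm: "GOOD \<theta> ((\<lambda>_. 0) - \<phi>)"
    using GOOD_diff[OF G0 Gphi p(2)] unfolding fun_diff_def .
  show ?case
  proof (rule exI[of _ "{(\<theta>, \<epsilon> - t0)}"], intro conjI ballI impI)
    show "finite {(\<theta>, \<epsilon> - t0)}" by simp
    show "\<And>x. x \<in> {(\<theta>, \<epsilon> - t0)} \<Longrightarrow> case x of (\<theta>, \<epsilon>) \<Rightarrow> 0 < \<theta> \<and> \<theta> < 1 \<and> 0 < \<epsilon>"
      using p t0 by auto
    fix \<psi> assume \<psi>: "\<psi> \<in> Vspace N A" and n: "\<forall>(\<theta>', \<epsilon>')\<in>{(\<theta>, \<epsilon> - t0)}. theta_norm N A \<theta>' \<psi> < \<epsilon>'"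
    have "theta_norm N A \<theta> (\<psi> - \<phi>) = theta_norm N A \<theta> (\<lambda>x. \<psi> x + ((\<lambda>_. 0) - \<phi>) x)"
      by (simp add: fun_diff_def)
    also have "\<dots> \<le> theta_norm N A \<theta> \<psi> + t0"
      unfolding t0_def by (rule tri[OF V_GOOD[OF \<psi> p(2,3)] Gm p(2)])
    also have "\<dots> < \<epsilon>" using n by simp
    finally show "\<psi> \<in> s" using s \<psi> by simp
  qed
qed

end



theorem theoremA1:
  fixes N :: nat and A :: "nat \<Rightarrow> nat \<Rightarrow> nat" and f :: "(nat \<Rightarrow> nat) \<Rightarrow> complex"
  assumes "N \<ge> 2"
    and "zero_one_matrix N A"
    and "aperiodic N A"
    and "f \<in> Vspace N A"
  shows "\<forall>U. (U \<subseteq> Vspace N A \<and> (\<exists>W. openin (V_topology N A) W \<and> (\<lambda>_. 0) \<in> W \<and> W \<subseteq> U))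
           \<longrightarrow> \<not> compactin (V_topology N A) ((V_topology N A) closure_of (transfer_op N A f ` U))"
proof (intro allI impI)
  interpret SFT N A using assms(1-3) by unfold_locales
  note fV = assms(4)
  fix U assume hU: "U \<subseteq> Vspace N A \<and> (\<exists>W. openin (V_topology N A) W \<and> (\<lambda>_. 0) \<in> W \<and> W \<subseteq> U)"
  then obtain W where W: "openin (V_topology N A) W" "(\<lambda>_. 0) \<in> W" "W \<subseteq> U" by blast
  have "generate_topology_on BB W"
    using W(1) unfolding V_topology_def by (rule openin_topology_generated_by)
  from NB[OF this W(2)] obtain F where F: "finite F" "\<forall>(\<theta>,\<epsilon>)\<in>F. 0<\<theta> \<and> \<theta><1 \<and> 0<\<epsilon>"
      "\<forall>\<psi>\<in>Vspace N A. (\<forall>(\<theta>,\<epsilon>)\<in>F. theta_norm N A \<theta> \<psi> < \<epsilon>) \<longrightarrow> \<psi> \<in> W" by blast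
  define \<theta>0 where "\<theta>0 = Min (insert (1/2) (fst ` F))"
  define \<epsilon>0 where "\<epsilon>0 = Min (insert 1 (snd ` F))"
  have finF: "finite (insert (1/2) (fst ` F))" "finite (insert 1 (snd ` F))" using F(1) by auto
  have th0: "0 < \<theta>0" "\<theta>0 < 1" unfolding \<theta>0_def using finF(1) F(2) by (auto simp: Min_gr_iff Min_less_iff)
  have th0le: "\<theta>0 \<le> \<theta>" if "(\<theta>,\<epsilon>) \<in> F" for \<theta> \<epsilon>
    unfolding \<theta>0_def using finF(1) that by (auto intro!: Min_le simp: image_iff) (metis fst_conv)
  have e0: "0 < \<epsilon>0" unfolding \<epsilon>0_def using finF(2) F(2) by (auto simp: Min_gr_iff)
  have e0le: "\<epsilon>0 \<le> \<epsilon>" if "(\<theta>,\<epsilon>) \<in> F" for \<theta> \<epsilon>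
    unfolding \<epsilon>0_def using finF(2) that by (auto intro!: Min_le simp: image_iff) (metis snd_conv)
  obtain R where R: "\<forall>\<omega>\<in>SS. cmod (f \<omega>) \<le> R"
    using fV unfolding Vspace_def bounded_iff by auto
  define \<theta>' where "\<theta>' = \<theta>0 / 2"
  have th': "0 < \<theta>'" "\<theta>' < 1" using th0 by (auto simp: \<theta>'_def)
  let ?T = "V_topology N A"
  let ?KK = "?T closure_of (transfer_op N A f ` U)"
  show "\<not> compactin ?T ?KK"
  proof
    assume cpt: "compactin ?T ?KK"
    have KKV: "?KK \<subseteq> Vspace N A" using closure_of_subset_topspace top_V by metis
    define ball where "ball \<phi> = {\<psi> \<in> Vspace N A. theta_norm N A \<theta>' (\<psi> - \<phi>) < 1}" for \<phi>
    have opn: "openin ?T (ball \<phi>)" if "\<phi> \<in> Vspace N A" for \<phi>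
    proof -
      have "ball \<phi> \<in> BB" unfolding ball_def
        using that th' by (intro CollectI exI[of _ \<phi>] exI[of _ \<theta>'] exI[of _ "1::real"]) auto
      then show ?thesis unfolding V_topology_def openin_topology_generated_by_iff
        by (rule generate_topology_on.Basis)
    qed
    have selfb: "\<phi> \<in> ball \<phi>" if "\<phi> \<in> Vspace N A" for \<phi>
    proof -
      have "\<phi> - \<phi> = (\<lambda>_. 0)" by (simp add: fun_eq_iff)
      then show ?thesis unfolding ball_def using that zero_norm by simp
    qed
    have "\<forall>u\<in>ball ` ?KK. openin ?T u" using opn KKV by blast
    moreover have "?KK \<subseteq> \<Union>(ball ` ?KK)" using selfb KKV by blast
    ultimately obtain \<F> where \<F>: "finite \<F>" "\<F> \<subseteq> ball ` ?KK" "?KK \<subseteq> \<Union>\<F>"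
      using cpt unfolding compactin_def by meson
    then obtain G where G: "G \<subseteq> ?KK" "finite G" "\<F> = ball ` G"
      by (meson finite_subset_image)
    define B where "B = 1 + (\<Sum>\<phi>\<in>G. \<bar>lip_const N A \<theta>' \<phi>\<bar>)"
    have bnd: "rat \<theta>' z p < B" if z: "z \<in> ?KK" and p: "p \<in> PP" for z p
    proof -
      obtain \<phi> where ph: "\<phi> \<in> G" "z \<in> ball \<phi>" using z \<F>(3) G(3) by blast
      have zV: "z \<in> Vspace N A" and phV: "\<phi> \<in> Vspace N A" using z ph G(1) KKV by auto
      have Gz: "GOOD \<theta>' z" and Gp: "GOOD \<theta>' \<phi>" using V_GOOD zV phV th' by auto
      have Gd: "GOOD \<theta>' (\<lambda>x. z x - \<phi> x)" using GOOD_diff[OF Gz Gp th'(1)] .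
      have r1: "rat \<theta>' z p \<le> rat \<theta>' (\<lambda>x. z x - \<phi> x) p + rat \<theta>' \<phi> p"
        using rat_add[OF p th'(1), of "\<lambda>x. z x - \<phi> x" \<phi>] by simp
      have r2: "rat \<theta>' (\<lambda>x. z x - \<phi> x) p \<le> theta_norm N A \<theta>' (\<lambda>x. z x - \<phi> x)"
        using rat_le_lip[OF Gd p] lip_le_norm[OF Gd] by linarith
      have r3: "theta_norm N A \<theta>' (\<lambda>x. z x - \<phi> x) < 1"
        using ph(2) unfolding ball_def fun_diff_def by simp
      have r4: "rat \<theta>' \<phi> p \<le> \<bar>lip_const N A \<theta>' \<phi>\<bar>" using rat_le_lip[OF Gp p] by linarith
      have r5: "\<bar>lip_const N A \<theta>' \<phi>\<bar> \<le> (\<Sum>\<phi>\<in>G. \<bar>lip_const N A \<theta>' \<phi>\<bar>)"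
        using G(2) ph(1) by (intro member_le_sum) auto
      show ?thesis unfolding B_def using r1 r2 r3 r4 r5 by linarith
    qed
    define D where "D = exp (- R) * \<epsilon>0 * \<theta>0 / 4"
    have Dp: "0 < D" unfolding D_def using e0 th0 by simp
    obtain n where n: "B / D < 2 ^ n" using real_arch_pow[of "2::real" "B / D"] by auto
    obtain \<eta> \<eta>' K where P: "\<eta> \<in> SS" "\<eta>' \<in> SS" "n < K" "\<forall>k<K. \<eta> k = \<eta>' k" "\<eta> K \<noteq> \<eta>' K"
      using pairs[of n] by blast
    have "\<eta> 0 \<in> {1..N}" using P(1) unfolding Sigma_A_def by auto
    then obtain a where a: "a \<in> {1..N}" "A a (\<eta> 0) = 1" using pred_ex by blast
    define c where "c = \<epsilon>0 * \<theta>0 ^ Suc K / 4"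
    have c: "0 \<le> c" unfolding c_def using e0 th0 by simp
    define \<psi> where "\<psi> = psi a (\<eta> K) K c"
    have psiV: "\<psi> \<in> Vspace N A" unfolding \<psi>_def by (rule psi_V[OF fV])
    have "\<psi> \<in> W"
    proof -
      have "theta_norm N A \<theta> \<psi> < \<epsilon>" if "(\<theta>,\<epsilon>) \<in> F" for \<theta> \<epsilon>
      proof -
        have t: "0 < \<theta>" "\<theta> < 1" using F(2) that by auto
        have pw: "\<theta>0 ^ Suc K \<le> \<theta> ^ Suc K" using th0le[OF that] th0 by (intro power_mono) auto
        have pw1: "\<theta> ^ Suc K \<le> 1" using t by (intro power_le_one) auto
        have pp: "0 < \<theta>0 ^ Suc K" using th0 by simp
        have h1: "theta_norm N A \<theta> \<psi> \<le> c + c / \<theta> ^ Suc K" unfolding \<psi>_def by (rule psi_norm[OF t c])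
        have h2: "c \<le> c / \<theta> ^ Suc K"
        proof -
          have tp: "0 < \<theta> ^ Suc K" using t by simp
          have "c * \<theta> ^ Suc K \<le> c" using mult_left_mono[OF pw1 c] by simp
          then show ?thesis using tp by (simp add: le_divide_eq)
        qed
        have h3: "c / \<theta> ^ Suc K \<le> c / \<theta>0 ^ Suc K" using c pw pp by (intro divide_left_mono) auto
        have h4: "c / \<theta>0 ^ Suc K = \<epsilon>0 / 4" unfolding c_def using pp th0 by simp
        have "theta_norm N A \<theta> \<psi> \<le> \<epsilon>0 / 4 + \<epsilon>0 / 4" using h1 h2 h3 h4 by linarith
        then show ?thesis using e0 e0le[OF that] by linarith
      qed
      then show ?thesis using F(3) psiV by blast
    qed
    then have inU: "\<psi> \<in> U" using W(3) by blast
    let ?g = "transfer_op N A f \<psi>"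
    have gV: "?g \<in> Vspace N A" unfolding \<psi>_def by (rule Lpsi_V[OF fV a(1) R c])
    have gK: "?g \<in> ?KK"
      unfolding in_closure_of using gV top_V inU by auto
    have pP: "(\<eta>, \<eta>') \<in> PP" using P unfolding PP_def by auto
    have low: "exp (- R) * c / \<theta>' ^ K \<le> rat \<theta>' ?g (\<eta>, \<eta>')"
      unfolding \<psi>_def by (rule Lpsi_pair[OF a(1) R c th'(1) P(1,2,4,5) a(2)])
    have "exp (- R) * c / \<theta>' ^ K = D * 2 ^ K"
      unfolding D_def c_def \<theta>'_def using th0 by (simp add: power_divide field_simps)
    moreover have "D * 2 ^ n \<le> D * 2 ^ K" using Dp P(3) by (intro mult_left_mono power_increasing) auto
    moreover have "B < D * 2 ^ n" using n Dp by (simp add: pos_divide_less_eq mult.commute)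
    ultimately have "B < rat \<theta>' ?g (\<eta>, \<eta>')" using low by linarith
    with bnd[OF gK pP] show False by linarith
  qed
qed


end
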